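(* Let $S\subseteq\mathbb{R}^d$ be a finite set, and suppose every pair $\{p_1,p_2\}$ of distinct points of $S$ is coloured red or blue in such a way that the distance between the points of any blue pair is strictly more than $3$ times the distance between the points of any red pair. Let $B$ be a largest blue clique in $S$ (a subset all of whose pairs are blue). Then $S$ can be partitioned into $|B|$ vertex-disjoint red cliques $R_1,\dots,R_{|B|}$ (subsets all of whose pairs are red) such that (1) each $R_i$ shares exactly one point with $B$, and (2) if $p\in R_i$, $q\in R_j$ with $i\ne j$, then $\{p,q\}$ is blue. *)

theory Defs
  imports "HOL-Analysis.Analysis"
begin

text \<open>A red/blue colouring of the unordered pairs of distinct points is modelled by
  a predicate on two-element sets: the pair {p,q} is blue iff blue {p,q}, red otherwise.\<close>

definition blue_clique :: "('a set \<Rightarrow> bool) \<Rightarrow> 'a set \<Rightarrow> bool" where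
  "blue_clique blue C \<longleftrightarrow> (\<forall>p\<in>C. \<forall>q\<in>C. p \<noteq> q \<longrightarrow> blue {p, q})"

definition red_clique :: "('a set \<Rightarrow> bool) \<Rightarrow> 'a set \<Rightarrow> bool" where
  "red_clique blue C \<longleftrightarrow> (\<forall>p\<in>C. \<forall>q\<in>C. p \<noteq> q \<longrightarrow> \<not> blue {p, q})"

end

theory Submission
  imports Defs
begin

theorem lemma1:
  fixes S :: "'a::euclidean_space set" and blue :: "'a set \<Rightarrow> bool" and B :: "'a set"
  assumes "finite S"
    and sep: "\<And>p1 p2 q1 q2. p1 \<in> S \<Longrightarrow> p2 \<in> S \<Longrightarrow> q1 \<in> S \<Longrightarrow> q2 \<in> S \<Longrightarrow>
               p1 \<noteq> p2 \<Longrightarrow> q1 \<noteq> q2 \<Longrightarrow> blue {p1, p2} \<Longrightarrow> \<not> blue {q1, q2} \<Longrightarrow>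
               dist p1 p2 > 3 * dist q1 q2"
    and "B \<subseteq> S" and "blue_clique blue B"
    and largest: "\<And>C. C \<subseteq> S \<Longrightarrow> blue_clique blue C \<Longrightarrow> card C \<le> card B"
  shows "\<exists>R :: nat \<Rightarrow> 'a set.
           (\<Union>i<card B. R i) = S
         \<and> (\<forall>i<card B. \<forall>j<card B. i \<noteq> j \<longrightarrow> R i \<inter> R j = {})
         \<and> (\<forall>i<card B. red_clique blue (R i))
         \<and> (\<forall>i<card B. card (R i \<inter> B) = 1)
         \<and> (\<forall>i<card B. \<forall>j<card B. i \<noteq> j \<longrightarrow> (\<forall>p\<in>R i. \<forall>q\<in>R j. blue {p, q}))"
proof -
  define E where "E = (\<lambda>p q. p = q \<or> \<not> blue {p, q})"
  have Esym: "E p q \<Longrightarrow> E q p" for p q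
    unfolding E_def by (auto simp: insert_commute)
  have Etrans: "E x z" if xyz: "x \<in> S" "y \<in> S" "z \<in> S" and h: "E x y" "E y z" for x y z
  proof (rule ccontr)
    assume n: "\<not> E x z"
    hence xz: "x \<noteq> z" "blue {x, z}" unfolding E_def by auto
    show False
    proof (cases "x = y \<or> y = z")
      case True thus False using n h by auto
    next
      case False
      hence r1: "\<not> blue {x, y}" "\<not> blue {y, z}" using h unfolding E_def by auto
      have "dist x z > 3 * dist x y" using sep[OF xyz(1) xyz(3) xyz(1) xyz(2)] xz r1 False by auto
      moreover have "dist x z > 3 * dist y z" using sep[OF xyz(1) xyz(3) xyz(2) xyz(3)] xz r1 False by auto
      moreover have "dist x z \<le> dist x y + dist y z" by (rule dist_triangle)
      ultimately show False by (smt (verit) zero_le_dist)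
    qed
  qed
  have finB: "finite B" using assms(1) assms(3) finite_subset by auto
  obtain f where f: "bij_betw f {..<card B} B"
    using finB by (metis bij_betw_from_nat_into_finite lessThan_atLeast0)
  have fB: "i < card B \<Longrightarrow> f i \<in> B" for i using f by (auto dest: bij_betwE)
  have finj: "i < card B \<Longrightarrow> j < card B \<Longrightarrow> i \<noteq> j \<Longrightarrow> f i \<noteq> f j" for i j
    using f by (auto simp: bij_betw_def inj_on_def)
  have bcl: "p \<in> B \<Longrightarrow> q \<in> B \<Longrightarrow> E p q \<Longrightarrow> p = q" for p q
    using assms(4) unfolding blue_clique_def E_def by auto
  define R where "R = (\<lambda>i. {x \<in> S. E x (f i)})"
  have cover: "\<exists>b\<in>B. E x b" if x: "x \<in> S" for x
  proof (rule ccontr)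
    assume "\<not> (\<exists>b\<in>B. E x b)"
    hence nb: "\<forall>b\<in>B. x \<noteq> b \<and> blue {x, b}" unfolding E_def by auto
    have "blue_clique blue (insert x B)"
      using assms(4) nb unfolding blue_clique_def by (auto simp: insert_commute)
    moreover have "insert x B \<subseteq> S" using x assms(3) by auto
    ultimately have "card (insert x B) \<le> card B" using largest by blast
    moreover have "card (insert x B) = card B + 1" using nb finB by auto
    ultimately show False by simp
  qed
  have disj: "\<forall>i<card B. \<forall>j<card B. i \<noteq> j \<longrightarrow> R i \<inter> R j = {}"
  proof (intro allI impI)
    fix i j assume ij: "i < card B" "j < card B" "i \<noteq> j"
    show "R i \<inter> R j = {}"
    proof (rule ccontr)
      assume "R i \<inter> R j \<noteq> {}"
      then obtain x where "x \<in> S" "E x (f i)" "E x (f j)" unfolding R_def by auto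
      hence "E (f i) (f j)" using Etrans[of "f i" x "f j"] Esym fB ij assms(3) by blast
      thus False using bcl fB finj ij by blast
    qed
  qed
  show ?thesis
  proof (intro exI[of _ R] conjI)
    show "(\<Union>i<card B. R i) = S"
    proof
      show "(\<Union>i<card B. R i) \<subseteq> S" unfolding R_def by auto
      show "S \<subseteq> (\<Union>i<card B. R i)"
      proof
        fix x assume x: "x \<in> S"
        then obtain b where b: "b \<in> B" "E x b" using cover by blast
        then obtain i where "i < card B" "b = f i" using f
          by (metis bij_betw_imp_surj_on imageE lessThan_iff)
        thus "x \<in> (\<Union>i<card B. R i)" using x b unfolding R_def by auto
      qed
    qed
    show "\<forall>i<card B. \<forall>j<card B. i \<noteq> j \<longrightarrow> R i \<inter> R j = {}" by (rule disj)
    show "\<forall>i<card B. red_clique blue (R i)"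
    proof (intro allI impI)
      fix i assume i: "i < card B"
      show "red_clique blue (R i)" unfolding red_clique_def
      proof (intro ballI impI)
        fix p q assume pq: "p \<in> R i" "q \<in> R i" "p \<noteq> q"
        hence "E p q" using Etrans[of p "f i" q] Esym fB i assms(3) unfolding R_def by blast
        thus "\<not> blue {p, q}" using pq unfolding E_def by auto
      qed
    qed
    show "\<forall>i<card B. card (R i \<inter> B) = 1"
    proof (intro allI impI)
      fix i assume i: "i < card B"
      have "R i \<inter> B = {f i}"
        using fB[OF i] assms(3) bcl unfolding R_def E_def by auto
      thus "card (R i \<inter> B) = 1" by simp
    qed
    show "\<forall>i<card B. \<forall>j<card B. i \<noteq> j \<longrightarrow> (\<forall>p\<in>R i. \<forall>q\<in>R j. blue {p, q})"
    proof (intro allI impI ballI)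
      fix i j p q assume ij: "i < card B" "j < card B" "i \<noteq> j" and pq: "p \<in> R i" "q \<in> R j"
      have "p \<noteq> q" using disj ij pq by blast
      show "blue {p, q}"
      proof (rule ccontr)
        assume "\<not> blue {p, q}"
        hence "E p q" unfolding E_def by auto
        have S: "p \<in> S" "q \<in> S" "E p (f i)" "E q (f j)" using pq unfolding R_def by auto
        have "E (f i) q" using Etrans[of "f i" p q] S Esym fB ij assms(3) \<open>E p q\<close> by blast
        hence "E (f i) (f j)" using Etrans[of "f i" q "f j"] S fB ij assms(3) by blast
        thus False using bcl fB finj ij by blast
      qed
    qed
  qed
qed

end
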